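(* Let $d=\mu_+-\mu_->0$. For every $\epsilon\in\left[0,\frac{d}{2}\right]$ and every $K\in\left(1,B_K(\epsilon)\right]$, where $$B_K(\epsilon)=\min\left\{\exp\!\left(\frac{(d-2\epsilon)^2}{2}\right),\ \frac{d}{\epsilon}-1\right\}$$ (with $d/\epsilon:=+\infty$ when $\epsilon=0$), the optimal fair, natural and robust thresholds satisfy $$\mu_-+\epsilon\;\le\;\theta_{\mathrm f}\;\le\;\theta^*\;\le\;\theta^{(\epsilon)}_{\mathrm r}\;\le\;\mu_+-\epsilon .$$ Moreover, for fixed $\mu_\pm$ and $K$, the map $\epsilon\mapsto\theta^{(\epsilon)}_{\mathrm r}$ is increasing on the set of $\epsilon\in\left[0,\frac d2\right]$ for which $K\le B_K(\epsilon)$.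
   Context: Setting (one-dimensional Gaussian mixture). Fix real numbers $\mu_-<\mu_+$ and $K>1$, and let $d=\mu_+-\mu_-$. Let $(X,Y)$ be a random pair with $\Pr(Y=1)=\Pr(Y=-1)=\tfrac12$, $X\mid Y=-1\sim\mathcal N(\mu_-,1)$, and $X\mid Y=1\sim\mathcal N(\mu_+,K^2)$ ($K^2$ is the variance). For $\theta\in\mathbb R$, the threshold classifier $f_\theta$ is given by $f_\theta(x)=1$ if $x>\theta$ and $f_\theta(x)=-1$ otherwise. The class-conditional error rates are $e_+(\theta)=\Pr(f_\theta(X)\ne 1\mid Y=1)=\Pr(X\le\theta\mid Y=1)$ and $e_-(\theta)=\Pr(f_\theta(X)\ne -1\mid Y=-1)=\Pr(X>\theta\mid Y=-1)$. The natural error is $R_{\mathrm{nat}}(\theta)=\Pr(f_\theta(X)\ne Y)=\tfrac12 e_+(\theta)+\tfrac12 e_-(\theta)$. For $\epsilon\ge 0$, the robust error is $R_{\mathrm{rob}}^{\epsilon}(\theta)=\Pr(\exists\tau,\ |\tau|\le\epsilon,\ f_\theta(X+\tau)\ne Y)=\tfrac12\Pr(X\le\theta+\epsilon\mid Y=1)+\tfrac12\Pr(X>\theta-\epsilon\mid Y=-1)$. Optimal models (all thresholds restricted to $[\mu_-,\mu_+]$): $\theta^*$ is the minimizer of $R_{\mathrm{nat}}$ over $[\mu_-,\mu_+]$ (the Bayes/natural classifier); $\theta_{\mathrm f}$ is the threshold in $[\mu_-,\mu_+]$ at which the class-conditional errors are equal, $e_+(\theta_{\mathrm f})=e_-(\theta_{\mathrm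 f})$ (the optimal accuracy-parity fair classifier, i.e. the lexicographic minimizer of first $|e_+(\theta)-e_-(\theta)|$ and then $R_{\mathrm{nat}}(\theta)$); $\theta^{(\epsilon)}_{\mathrm r}$ is the minimizer of $R^{\epsilon}_{\mathrm{rob}}$ over $[\mu_-,\mu_+]$ (the optimal robust classifier). *)

theory Defs
  imports "HOL-Probability.Probability"
begin

text \<open>Class-conditional laws: X | Y=-1 ~ N(mu_m, 1), X | Y=1 ~ N(mu_p, K^2)
  (normal_density m s has standard deviation s).\<close>

definition law_pos :: "real \<Rightarrow> real \<Rightarrow> real measure" where
  "law_pos mu_p K = density lborel (normal_density mu_p K)"

definition law_neg :: "real \<Rightarrow> real measure" where
  "law_neg mu_m = density lborel (normal_density mu_m 1)"

definition e_pos :: "real \<Rightarrow> real \<Rightarrow> real \<Rightarrow> real" where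
  "e_pos mu_p K theta = measure (law_pos mu_p K) {..theta}"

definition e_neg :: "real \<Rightarrow> real \<Rightarrow> real" where
  "e_neg mu_m theta = measure (law_neg mu_m) {theta<..}"

definition R_nat :: "real \<Rightarrow> real \<Rightarrow> real \<Rightarrow> real \<Rightarrow> real" where
  "R_nat mu_m mu_p K theta = e_pos mu_p K theta / 2 + e_neg mu_m theta / 2"

definition R_rob :: "real \<Rightarrow> real \<Rightarrow> real \<Rightarrow> real \<Rightarrow> real \<Rightarrow> real" where
  "R_rob mu_m mu_p K eps theta =
     measure (law_pos mu_p K) {..theta + eps} / 2 + measure (law_neg mu_m) {theta - eps<..} / 2"

definition is_minimizer_on :: "(real \<Rightarrow> real) \<Rightarrow> real set \<Rightarrow> real \<Rightarrow> bool" where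
  "is_minimizer_on f S x \<longleftrightarrow> x \<in> S \<and> (\<forall>y\<in>S. f x \<le> f y)"

definition B_K :: "real \<Rightarrow> real \<Rightarrow> real \<Rightarrow> real" where
  "B_K mu_m mu_p eps =
     (if eps = 0 then exp (((mu_p - mu_m) - 2 * eps)^2 / 2)
      else min (exp (((mu_p - mu_m) - 2 * eps)^2 / 2)) ((mu_p - mu_m) / eps - 1))"

end

theory Submission imports Defs begin


definition Phi :: "real \<Rightarrow> real" where
  "Phi t = (\<integral>x. std_normal_density x * indicator {..t} x \<partial>lborel)"

lemma measure_nd:
  assumes "0 < s" and [measurable]: "A \<in> sets borel"
  shows "measure (density lborel (normal_density m s)) A = (\<integral>x. normal_density m s x * indicator A x \<partial>lborel)"
proof -
  have "emeasure (density lborel (normal_density m s)) A = (\<integral>\<^sup>+ x. ennreal (normal_density m s x * indicator A x) \<partial>lborel)"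
    by (subst emeasure_density) (auto intro!: nn_integral_cong simp: indicator_def)
  also have "\<dots> = ennreal (\<integral>x. normal_density m s x * indicator A x \<partial>lborel)"
    using assms by (intro nn_integral_eq_integral integrable_real_mult_indicator) auto
  finally show ?thesis unfolding measure_def by simp
qed

lemma integrable_std_ind[simp]: "A \<in> sets borel \<Longrightarrow> 0 < s \<Longrightarrow> integrable lborel (\<lambda>x. normal_density m s x * indicator A x)"
  by (intro integrable_real_mult_indicator) auto

lemma e_pos_Phi:
  assumes "0 < K"
  shows "measure (law_pos mu K) {..t} = Phi ((t - mu) / K)"
proof -
  have "measure (law_pos mu K) {..t} = (\<integral>x. normal_density mu K x * indicator {..t} x \<partial>lborel)"
    unfolding law_pos_def using assms by (simp add: measure_nd)
  also have "\<dots> = \<bar>K\<bar> *\<^sub>R (\<integral>x. normal_density mu K (mu + K * x) * indicator {..t} (mu + K * x) \<partial>lborel)"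
    by (rule lborel_integral_real_affine) (use assms in auto)
  also have "\<dots> = (\<integral>x. std_normal_density x * indicator {..(t - mu)/K} x \<partial>lborel)"
    using assms
    by (simp flip: integral_mult_right_zero add: indicator_def normal_density_def field_simps real_sqrt_mult power2_eq_square del: real_sqrt_mult_self)
       (simp add: real_sqrt_mult[symmetric])
  finally show ?thesis unfolding Phi_def .
qed

lemma e_neg_Phi:
  shows "measure (law_neg mu) {t<..} = Phi (mu - t)"
proof -
  have "measure (law_neg mu) {t<..} = (\<integral>x. normal_density mu 1 x * indicator {t<..} x \<partial>lborel)"
    unfolding law_neg_def by (simp add: measure_nd)
  also have "\<dots> = \<bar>-1\<bar> *\<^sub>R (\<integral>x. normal_density mu 1 (mu + (-1) * x) * indicator {t<..} (mu + (-1) * x) \<partial>lborel)"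
    by (rule lborel_integral_real_affine) auto
  also have "\<dots> = (\<integral>x. normal_density mu 1 (mu + (-1) * x) * indicator {t<..} (mu + (-1) * x) \<partial>lborel)"
    by simp
  also have "\<dots> = (\<integral>x. std_normal_density x * indicator {..<mu - t} x \<partial>lborel)"
    by (rule Bochner_Integration.integral_cong[OF refl]) (simp add: normal_density_def indicator_def)
  also have "\<dots> = (\<integral>x. std_normal_density x * indicator {..mu - t} x \<partial>lborel)"
  proof (rule integral_cong_AE)
    show "AE x in lborel. std_normal_density x * indicator {..<mu - t} x = std_normal_density x * indicator {..mu - t} x"
      by (rule AE_mp[OF AE_lborel_singleton[of "mu - t"]]) (simp add: indicator_def)
  qed simp_all
  finally show ?thesis unfolding Phi_def .
qed

lemma Phi_diff:
  assumes "a \<le> u"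
  shows "Phi u = Phi a + integral {a..u} std_normal_density"
proof -
  have "Phi u = (\<integral>x. std_normal_density x * indicator {..a} x + std_normal_density x * indicator {a..u} x \<partial>lborel)"
    unfolding Phi_def
  proof (rule integral_cong_AE)
    show "AE x in lborel. std_normal_density x * indicator {..u} x = std_normal_density x * indicator {..a} x + std_normal_density x * indicator {a..u} x"
      by (rule AE_mp[OF AE_lborel_singleton[of "a"]]) (use assms in \<open>simp add: indicator_def\<close>)
  qed simp_all
  also have "\<dots> = Phi a + (\<integral>x. std_normal_density x * indicator {a..u} x \<partial>lborel)"
    unfolding Phi_def by (intro Bochner_Integration.integral_add) auto
  also have "(\<integral>x. std_normal_density x * indicator {a..u} x \<partial>lborel) = integral {a..u} std_normal_density"
  proof -
    have si: "set_integrable lborel {a..u} std_normal_density"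
      unfolding set_integrable_def
      by (rule integrable_mult_indicator[where f=std_normal_density, simplified mult.commute]) auto
    have "(LINT x:{a..u}|lborel. std_normal_density x) = integral {a..u} std_normal_density"
      by (rule set_borel_integral_eq_integral(2)[OF si])
    then show ?thesis by (simp add: set_lebesgue_integral_def mult.commute)
  qed
  finally show ?thesis .
qed

lemma std_cont: "continuous_on S std_normal_density"
  unfolding normal_density_def by (intro continuous_intros) auto

lemma Phi_deriv: "(Phi has_real_derivative std_normal_density x) (at x)"
proof -
  let ?g = "\<lambda>u. Phi (x - 1) + integral {x - 1..u} std_normal_density"
  have "(?g has_real_derivative std_normal_density x) (at x within {x-1..x+1})"
    by (intro DERIV_add[where D=0, simplified] DERIV_const integral_has_real_derivative std_cont) auto
  then have d: "(?g has_real_derivative std_normal_density x) (at x)"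
    by (simp add: at_within_Icc_at)
  show ?thesis
    by (rule has_field_derivative_transform_within_open[OF d, of "{x-1<..<x+1}"])
       (auto intro!: Phi_diff[symmetric])
qed



lemma std_pos: "0 < std_normal_density x"
  by (rule normal_density_pos) simp

lemma Phi_strict: "x < y \<Longrightarrow> Phi x < Phi y"
  by (rule DERIV_pos_imp_increasing[of x y Phi]) (auto intro: Phi_deriv std_pos)

lemma Phi_inj: "Phi x = Phi y \<Longrightarrow> x = y"
  by (metis Phi_strict less_irrefl linorder_neqE_linordered_idom)

locale gm =
  fixes m p K :: real
  assumes mp: "m < p" and K1: "1 < K"
begin

definition R :: "real \<Rightarrow> real \<Rightarrow> real" where
  "R e t = Phi ((t + e - p) / K) / 2 + Phi (m + e - t) / 2"

definition H :: "real \<Rightarrow> real \<Rightarrow> real" where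
  "H e t = (t - e - m)^2 - (t + e - p)^2 / K^2 - 2 * ln K"

definition good :: "real \<Rightarrow> bool" where
  "good e \<longleftrightarrow> 0 \<le> e \<and> e \<le> (p - m) / 2 \<and> K \<le> exp ((p - m - 2 * e)^2 / 2) \<and> K * e \<le> p - m - e"

lemma Kpos: "0 < K" using K1 by simp
lemma lnK: "0 < ln K" using K1 by simp

lemma R_rob_eq: "R_rob m p K e = R e"
  by (rule ext) (simp add: R_rob_def R_def e_pos_Phi e_neg_Phi Kpos algebra_simps)

lemma R_nat_eq: "R_nat m p K = R 0"
  by (rule ext) (simp add: R_nat_def e_pos_def e_neg_def R_def e_pos_Phi e_neg_Phi Kpos algebra_simps)

lemma R_deriv: "(R e has_real_derivative
   (std_normal_density ((t + e - p) / K) / K - std_normal_density (m + e - t)) / 2) (at t)"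
proof -
  have i1: "((\<lambda>t. (t + e - p) / K) has_real_derivative 1 / K) (at t)"
    using Kpos by (auto intro!: derivative_eq_intros)
  have i2: "((\<lambda>t. m + e - t) has_real_derivative -1) (at t)"
    by (rule derivative_eq_intros refl | simp)+
  have d1: "((\<lambda>t. Phi ((t + e - p) / K)) has_real_derivative std_normal_density ((t + e - p) / K) * (1 / K)) (at t)"
    by (rule DERIV_chain2[OF Phi_deriv i1])
  have d2: "((\<lambda>t. Phi (m + e - t)) has_real_derivative std_normal_density (m + e - t) * (-1)) (at t)"
    by (rule DERIV_chain2[OF Phi_deriv i2])
  have "((\<lambda>t. Phi ((t + e - p) / K) / 2 + Phi (m + e - t) / 2) has_real_derivative
     std_normal_density ((t + e - p) / K) * (1 / K) / 2 + std_normal_density (m + e - t) * (-1) / 2) (at t)"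
    by (intro DERIV_add DERIV_cdivide d1 d2)
  then show ?thesis unfolding R_def[abs_def] by (simp add: field_simps)
qed

lemma R_cont: "continuous_on S (R e)"
  by (meson DERIV_isCont R_deriv continuous_at_imp_continuous_on)

lemma D_sign:
  shows "(0 < std_normal_density ((t + e - p) / K) / K - std_normal_density (m + e - t) \<longleftrightarrow> 0 < H e t) \<and> (std_normal_density ((t + e - p) / K) / K - std_normal_density (m + e - t) < 0 \<longleftrightarrow> H e t < 0)"
  (is "(0 < ?D \<longleftrightarrow> _) \<and> (?D < 0 \<longleftrightarrow> _)")
proof -
  define X where "X = -((t + e - p)^2) / (2 * K^2) - ln K"
  define Y where "Y = -((m + e - t)^2) / 2"
  have c: "0 < sqrt (2 * pi)" by simp
  have e1: "std_normal_density ((t + e - p) / K) / K = exp X / sqrt (2 * pi)"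
  proof -
    have "exp X = exp (-((t + e - p)^2) / (2 * K^2)) / K"
      unfolding X_def using Kpos by (simp add: exp_diff)
    moreover have eq: "- ((t + e - p) / K)\<^sup>2 / 2 = -((t + e - p)^2) / (2 * K^2)"
      by (simp add: power_divide)
    ultimately show ?thesis unfolding std_normal_density_def eq by simp
  qed
  have e2: "std_normal_density (m + e - t) = exp Y / sqrt (2 * pi)"
    unfolding std_normal_density_def Y_def by simp
  have D: "?D = (exp X - exp Y) / sqrt (2 * pi)"
    unfolding e1 e2 by (simp add: diff_divide_distrib)
  have HXY: "H e t = 2 * (X - Y)"
    unfolding H_def X_def Y_def using Kpos by (simp add: field_simps power2_eq_square)
  have "(0 < ?D \<longleftrightarrow> X > Y)" unfolding D using c by (simp add: zero_less_divide_iff)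
  moreover have "(?D < 0 \<longleftrightarrow> X < Y)" unfolding D using c by (simp add: divide_less_0_iff)
  ultimately show ?thesis unfolding HXY by auto
qed

lemma mono_pos:
  assumes "s < t" "\<And>x. s < x \<Longrightarrow> x < t \<Longrightarrow> 0 < H e x"
  shows "R e s < R e t"
proof (rule DERIV_pos_imp_increasing_open[OF assms(1) _ R_cont])
  fix x assume "s < x" "x < t"
  then show "\<exists>y. (R e has_real_derivative y) (at x) \<and> 0 < y"
    using R_deriv D_sign assms(2) by fastforce
qed

lemma mono_neg:
  assumes "s < t" "\<And>x. s < x \<Longrightarrow> x < t \<Longrightarrow> H e x < 0"
  shows "R e s > R e t"
proof (rule DERIV_neg_imp_decreasing_open[OF assms(1) _ R_cont])
  fix x assume "s < x" "x < t"
  then show "\<exists>y. (R e has_real_derivative y) (at x) \<and> y < 0"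
    using R_deriv D_sign assms(2) by fastforce
qed

lemma H_cont: "isCont (H e) x"
  unfolding H_def using Kpos by (intro continuous_intros) auto

end


context gm begin

lemma HA:
  assumes g: "good e" and t: "m \<le> t" "t \<le> m + e"
  shows "H e t < 0"
proof -
  from g have e0: "0 \<le> e" and Ke: "K * e \<le> p - m - e" unfolding good_def by auto
  have "K * (e - (t - m)) \<le> p - e - t"
  proof -
    have "K * (e - (t - m)) = K * e - K * (t - m)" by (simp add: algebra_simps)
    moreover have "t - m \<le> K * (t - m)" using K1 t by (simp add: mult_le_cancel_right1)
    ultimately show ?thesis using Ke by linarith
  qed
  then have le: "e - (t - m) \<le> (p - e - t) / K" using Kpos by (simp add: pos_le_divide_eq mult.commute)
  have "(t - e - m)^2 = (e - (t - m))^2" by (simp add: power2_commute algebra_simps)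
  also have "\<dots> \<le> ((p - e - t) / K)^2"
    by (rule power_mono[OF le]) (use t in simp)
  also have "\<dots> = (t + e - p)^2 / K^2" by (simp add: power_divide power2_commute algebra_simps)
  finally show ?thesis unfolding H_def using lnK by linarith
qed

lemma HB:
  assumes g: "good e" and t: "m + e \<le> t1" "t1 < t2" "t2 \<le> p - e"
  shows "H e t1 < H e t2"
proof -
  have a: "(t1 - e - m)^2 < (t2 - e - m)^2"
    by (rule power_strict_mono) (use t in auto)
  have b: "(p - e - t2)^2 \<le> (p - e - t1)^2"
    by (rule power_mono) (use t in auto)
  have b': "(t2 + e - p)^2 / K^2 \<le> (t1 + e - p)^2 / K^2"
    using b by (intro divide_right_mono) (auto simp: power2_commute algebra_simps)
  show ?thesis unfolding H_def using a b' by linarith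
qed

lemma HC0:
  assumes g: "good e"
  shows "0 \<le> H e (p - e)"
proof -
  from g have "K \<le> exp ((p - m - 2 * e)^2 / 2)" unfolding good_def by auto
  then have "ln K \<le> (p - m - 2 * e)^2 / 2" using Kpos by (metis ln_exp ln_le_cancel_iff exp_gt_zero)
  then show ?thesis unfolding H_def by (simp add: algebra_simps power2_eq_square)
qed

lemma HC:
  assumes g: "good e" and t: "p - e < t"
  shows "0 < H e t"
proof -
  define s where "s = t - (p - e)"
  define d where "d = p - m - 2 * e"
  have s0: "0 < s" using t s_def by simp
  have d0: "0 \<le> d" using g unfolding good_def d_def by auto
  have "ln K \<le> d^2 / 2" using HC0[OF g] unfolding H_def d_def by (simp add: algebra_simps power2_eq_square)
  have e1: "t - e - m = d + s" unfolding d_def s_def by simp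
  have e2: "t + e - p = s" unfolding s_def by simp
  have "s^2 / K^2 < s^2"
  proof -
    have "1 < K^2" using K1 by (simp add: one_less_power)
    then show ?thesis using s0 by (simp add: divide_less_eq)
  qed
  moreover have "(d + s)^2 \<ge> d^2 + s^2" using d0 s0 by (simp add: power2_sum)
  ultimately show ?thesis unfolding H_def e1 e2 using \<open>ln K \<le> d^2 / 2\<close> by linarith
qed

lemma SS:
  assumes g: "good e" and t: "m \<le> t1" "t1 < t2" and h: "0 \<le> H e t1"
  shows "0 < H e t2"
proof -
  have "m + e < t1" using HA[OF g t(1)] h by fastforce
  show ?thesis
  proof (cases "p - e < t2")
    case True then show ?thesis using HC[OF g] by simp
  next
    case False
    then have "H e t1 < H e t2" using HB[OF g] \<open>m + e < t1\<close> t by simp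
    then show ?thesis using h by simp
  qed
qed

lemma Hp: "good e \<Longrightarrow> 0 \<le> H e p"
  using HC0[of e] HC[of e p] unfolding good_def by (cases "e = 0") auto

lemma Hm: "good e \<Longrightarrow> H e m < 0"
  using HA[of e m] unfolding good_def by auto

lemma G1:
  assumes g: "good e" and mn: "is_minimizer_on (R e) {m..p} t"
    and q: "q \<in> {m..p}" "H e q < 0"
  shows "q < t"
proof (rule ccontr)
  assume "\<not> q < t"
  then have tq: "t \<le> q" by simp
  obtain r where r: "q \<le> r" "r \<le> p" "H e r = 0"
    using IVT[of "H e" q 0 p] q Hp[OF g] H_cont by auto
  have qr: "q < r" using r q by (cases "q = r") auto
  have "R e t > R e r"
  proof (rule mono_neg)
    show "t < r" using tq qr by simp
    fix x assume "t < x" "x < r"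
    show "H e x < 0"
    proof (rule ccontr)
      assume "\<not> H e x < 0"
      then have "0 < H e r" using SS[OF g, of x r] \<open>t < x\<close> \<open>x < r\<close> mn
        unfolding is_minimizer_on_def by auto
      then show False using r by simp
    qed
  qed
  moreover have "R e t \<le> R e r" using mn r q unfolding is_minimizer_on_def by auto
  ultimately show False by simp
qed

lemma G2:
  assumes g: "good e" and mn: "is_minimizer_on (R e) {m..p} t"
    and q: "q \<in> {m..p}" "0 < H e q"
  shows "t < q"
proof (rule ccontr)
  assume "\<not> t < q"
  then have tq: "q \<le> t" by simp
  obtain r where r: "m \<le> r" "r \<le> q" "H e r = 0"
    using IVT[of "H e" m 0 q] q Hm[OF g] H_cont by auto
  have qr: "r < q" using r q by (cases "q = r") auto
  have "R e r < R e t"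
  proof (rule mono_pos)
    show "r < t" using tq qr by simp
    fix x assume "r < x" "x < t"
    show "0 < H e x" using SS[OF g, of r x] r \<open>r < x\<close> by simp
  qed
  moreover have "R e t \<le> R e r" using mn r q unfolding is_minimizer_on_def by auto
  ultimately show False by simp
qed

lemma Z:
  assumes g: "good e" and mn: "is_minimizer_on (R e) {m..p} t"
  shows "H e t = 0"
proof -
  have tin: "t \<in> {m..p}" using mn unfolding is_minimizer_on_def by auto
  have "\<not> H e t < 0" using G1[OF g mn tin] by auto
  moreover have "\<not> 0 < H e t" using G2[OF g mn tin] by auto
  ultimately show ?thesis by simp
qed

lemma bounds:
  assumes g: "good e" and mn: "is_minimizer_on (R e) {m..p} t"
  shows "m + e \<le> t \<and> t \<le> p - e"
proof -
  have tin: "t \<in> {m..p}" using mn unfolding is_minimizer_on_def by auto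
  have "\<not> p - e < t" using HC[OF g] Z[OF g mn] by fastforce
  moreover have "\<not> t < m + e" using HA[OF g] Z[OF g mn] tin by fastforce
  ultimately show ?thesis by simp
qed

lemma uniq:
  assumes g: "good e" and mn: "is_minimizer_on (R e) {m..p} t" "is_minimizer_on (R e) {m..p} t'"
  shows "t = t'"
proof -
  have tin: "t \<in> {m..p}" "t' \<in> {m..p}" using mn unfolding is_minimizer_on_def by auto
  have z: "H e t = 0" "H e t' = 0" using Z[OF g] mn by auto
  show ?thesis
  proof (rule ccontr)
    assume "t \<noteq> t'"
    then consider "t < t'" | "t' < t" by linarith
    then show False
      using SS[OF g, of t t'] SS[OF g, of t' t] z tin by auto
  qed
qed

lemma monot:
  assumes g1: "good e1" and g2: "good e2" and e: "e1 < e2"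
    and mn1: "is_minimizer_on (R e1) {m..p} t1" and mn2: "is_minimizer_on (R e2) {m..p} t2"
  shows "t1 < t2"
proof -
  have tin: "t2 \<in> {m..p}" using mn2 unfolding is_minimizer_on_def by auto
  define a where "a = t2 - e2 - m"
  define b where "b = p - e2 - t2"
  define dl where "dl = e2 - e1"
  have a0: "0 \<le> a" and b0: "0 \<le> b" using bounds[OF g2 mn2] unfolding a_def b_def by auto
  have dl0: "0 < dl" using e dl_def by simp
  have sq: "(t2 + e2 - p)^2 = b^2" unfolding b_def by (simp add: power2_commute algebra_simps)
  have z: "a^2 - b^2 / K^2 - 2 * ln K = 0" using Z[OF g2 mn2] unfolding H_def a_def[symmetric] sq .
  have "(b / K)^2 < a^2" using z lnK by (simp add: power_divide)
  then have abK: "b / K < a" using a0 by (rule power_less_imp_less_base)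
  have "b / K^2 \<le> b / K" using b0 K1 by (simp add: frac_le power2_eq_square)
  then have ab: "b / K^2 < a" using abK by simp
  have "dl^2 / K^2 < dl^2"
  proof -
    have "1 < K^2" using K1 by (simp add: one_less_power)
    then show ?thesis using dl0 by (simp add: divide_less_eq)
  qed
  have e1': "t2 - e1 - m = a + dl" unfolding a_def dl_def by simp
  have e2': "(t2 + e1 - p)^2 = (b + dl)^2" unfolding b_def dl_def by (simp add: power2_commute algebra_simps)
  have "H e1 t2 = (a + dl)^2 - (b + dl)^2 / K^2 - 2 * ln K" unfolding H_def e1' e2' ..
  also have "\<dots> = (a^2 - b^2 / K^2 - 2 * ln K) + 2 * dl * (a - b / K^2) + (dl^2 - dl^2 / K^2)"
    unfolding divide_inverse power2_sum by algebra
  finally have "H e1 t2 = 2 * dl * (a - b / K^2) + (dl^2 - dl^2 / K^2)" using z by simp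
  moreover have "0 < 2 * dl * (a - b / K^2)" using dl0 ab by simp
  ultimately have "0 < H e1 t2" using \<open>dl^2 / K^2 < dl^2\<close> by linarith
  then show ?thesis using G2[OF g1 mn1 tin] by simp
qed

lemma fair:
  assumes g: "good e" and th: "e_pos p K th = e_neg m th"
  shows "m + e \<le> th \<and> H 0 th < 0"
proof -
  have "Phi ((th - p) / K) = Phi (m - th)" using th unfolding e_pos_def e_neg_def
    by (simp add: e_pos_Phi e_neg_Phi Kpos)
  then have eq: "(th - p) / K = m - th" by (rule Phi_inj)
  then have eq2: "th - p = K * (m - th)" using Kpos by (simp add: divide_eq_eq mult.commute)
  have "H 0 th = (th - m)^2 - (m - th)^2 - 2 * ln K" unfolding H_def
    using eq by (simp flip: power_divide)
  then have "H 0 th < 0" using lnK by (simp add: power2_commute)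
  moreover have "e \<le> th - m"
  proof -
    have "(th - m) * (1 + K) = p - m" using eq2 by (simp add: algebra_simps)
    moreover have "e * (1 + K) \<le> p - m" using g unfolding good_def by (simp add: algebra_simps)
    ultimately have "e * (1 + K) \<le> (th - m) * (1 + K)" by simp
    then show ?thesis using Kpos by (simp add: mult_le_cancel_right)
  qed
  ultimately show ?thesis by simp
qed

lemma good_BK:
  assumes "0 \<le> e" "e \<le> (p - m) / 2" "K \<le> B_K m p e"
  shows "good e"
proof (cases "e = 0")
  case True then show ?thesis using assms mp unfolding good_def B_K_def by simp
next
  case False
  then have e0: "0 < e" using assms by simp
  have k1: "K \<le> exp ((p - m - 2 * e)^2 / 2)" and k2: "K \<le> (p - m) / e - 1"
    using assms False unfolding B_K_def by auto
  from k2 have "K + 1 \<le> (p - m) / e" by simp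
  then have "(K + 1) * e \<le> p - m" using e0 by (simp add: le_divide_eq)
  then have "K * e \<le> p - m - e" by (simp add: algebra_simps)
  then show ?thesis using assms k1 unfolding good_def by simp
qed

lemma good0:
  assumes "good e" shows "good 0"
proof -
  have "(p - m - 2 * e)^2 \<le> (p - m - 2 * 0)^2"
    by (rule power_mono) (use assms in \<open>auto simp: good_def\<close>)
  then have "exp ((p - m - 2 * e)^2 / 2) \<le> exp ((p - m - 2 * 0)^2 / 2)" by simp
  moreover have "K \<le> exp ((p - m - 2 * e)^2 / 2)" using assms unfolding good_def by simp
  ultimately have "K \<le> exp ((p - m - 2 * 0)^2 / 2)" by linarith
  then show ?thesis using mp unfolding good_def by simp
qed

end

theorem theorem6p1:
  fixes mu_m mu_p K :: real
  assumes "mu_m < mu_p" and "1 < K"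
  shows "(\<forall>eps theta_f theta_s theta_r.
            0 \<le> eps \<and> eps \<le> (mu_p - mu_m) / 2 \<and> K \<le> B_K mu_m mu_p eps
            \<and> theta_f \<in> {mu_m..mu_p} \<and> e_pos mu_p K theta_f = e_neg mu_m theta_f
            \<and> is_minimizer_on (R_nat mu_m mu_p K) {mu_m..mu_p} theta_s
            \<and> is_minimizer_on (R_rob mu_m mu_p K eps) {mu_m..mu_p} theta_r
            \<longrightarrow> mu_m + eps \<le> theta_f \<and> theta_f \<le> theta_s \<and> theta_s \<le> theta_r
                \<and> theta_r \<le> mu_p - eps)
       \<and> (\<forall>eps1 eps2 t1 t2.
            0 \<le> eps1 \<and> eps1 \<le> (mu_p - mu_m) / 2 \<and> K \<le> B_K mu_m mu_p eps1
            \<and> 0 \<le> eps2 \<and> eps2 \<le> (mu_p - mu_m) / 2 \<and> K \<le> B_K mu_m mu_p eps2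
            \<and> eps1 < eps2
            \<and> is_minimizer_on (R_rob mu_m mu_p K eps1) {mu_m..mu_p} t1
            \<and> is_minimizer_on (R_rob mu_m mu_p K eps2) {mu_m..mu_p} t2
            \<longrightarrow> t1 < t2)"
proof -
  interpret gm mu_m mu_p K using assms by unfold_locales
  have P1: "mu_m + eps \<le> theta_f \<and> theta_f \<le> theta_s \<and> theta_s \<le> theta_r \<and> theta_r \<le> mu_p - eps"
    if h: "0 \<le> eps \<and> eps \<le> (mu_p - mu_m) / 2 \<and> K \<le> B_K mu_m mu_p eps
            \<and> theta_f \<in> {mu_m..mu_p} \<and> e_pos mu_p K theta_f = e_neg mu_m theta_f
            \<and> is_minimizer_on (R_nat mu_m mu_p K) {mu_m..mu_p} theta_s
            \<and> is_minimizer_on (R_rob mu_m mu_p K eps) {mu_m..mu_p} theta_r"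
    for eps theta_f theta_s theta_r
  proof -
    have g: "good eps" using h good_BK by blast
    have g0: "good 0" using good0[OF g] .
    have ms: "is_minimizer_on (R 0) {mu_m..mu_p} theta_s" using h R_nat_eq by simp
    have mr: "is_minimizer_on (R eps) {mu_m..mu_p} theta_r" using h R_rob_eq by simp
    have f: "mu_m + eps \<le> theta_f \<and> H 0 theta_f < 0" using fair[OF g] h by blast
    have fs: "theta_f \<le> theta_s" using G1[OF g0 ms, of theta_f] f h by simp
    have sr: "theta_s \<le> theta_r"
    proof (cases "eps = 0")
      case True then show ?thesis using uniq[OF g0 ms] mr by simp
    next
      case False then have "0 < eps" using h by simp
      then show ?thesis using monot[OF g0 g _ ms mr] by simp
    qed
    show ?thesis using f fs sr bounds[OF g mr] by simp
  qed
  have P2: "t1 < t2"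
    if h: "0 \<le> eps1 \<and> eps1 \<le> (mu_p - mu_m) / 2 \<and> K \<le> B_K mu_m mu_p eps1
            \<and> 0 \<le> eps2 \<and> eps2 \<le> (mu_p - mu_m) / 2 \<and> K \<le> B_K mu_m mu_p eps2
            \<and> eps1 < eps2
            \<and> is_minimizer_on (R_rob mu_m mu_p K eps1) {mu_m..mu_p} t1
            \<and> is_minimizer_on (R_rob mu_m mu_p K eps2) {mu_m..mu_p} t2"
    for eps1 eps2 t1 t2
  proof -
    have g1: "good eps1" and g2: "good eps2" using h good_BK by blast+
    show "t1 < t2" using monot[OF g1 g2] h R_rob_eq by simp
  qed
  show ?thesis using P1 P2 by blast
qed

end
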